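(* Let $m\ge1$, $C>0$, $\mathbf{y}\in\{-1,1\}^m$, let $\mathbf{Q}\in\mathbb{R}^{m\times m}$ be a symmetric positive semidefinite kernel matrix on the labeled nodes, let $\mathcal{T}$ be a finite set of test nodes with kernel values $Q_{ti}$ ($t\in\mathcal{T}$, $i\in[m]$). Let $\boldsymbol\alpha^*\in\mathcal{S}(\mathbf{y})$, $\hat p_t=\sum_{i=1}^m y_i\alpha_i^*Q_{ti}$ and assume $\hat p_t\ne0$ for all $t\in\mathcal{T}$. Set $M_{u_i}=\sum_{j}C|Q_{ij}|-1$, $M_{v_i}=\sum_jC|Q_{ij}|+1$ for $i\in[m]$, and $l_t=-C\sum_{i=1}^m|Q_{ti}|$, $h_t=C\sum_{i=1}^m|Q_{ti}|$ for $t\in\mathcal{T}$. Consider the MILP $$P_C(\mathbf{y}):\ \max\ \sum_{t\in\mathcal{T}}c_t$$ over the variables and subject to all constraints of the sample-wise MILP $P(\mathbf{y})$ (namely $\boldsymbol{\alpha},\tilde{\mathbf{y}},\mathbf{z},\mathbf{u},\mathbf{v}\in\mathbb{R}^m$, $\mathbf{y}',\mathbf{s},\mathbf{t}\in\{0,1\}^m$, $\mathbf{R}\in\mathbb{R}^{m\times m}$ with $\sum_i(1-y_i\tilde y_i)\le2\lfloor\epsilon m\rfloor$ and, for all $i,j\in[m]$: $\tilde y_i=2y_i'-1$; $\sum_jR_{ij}Q_{ij}-1-u_i+v_i=0$; $u_i,v_i\ge0$; $-C(1+\tilde y_i)\le R_{ij}+z_j\le C(1+\tilde y_i)$; $-C(1-\tilde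 y_i)\le R_{ij}-z_j\le C(1-\tilde y_i)$; $-\alpha_i\le z_i\le\alpha_i$; $\alpha_i-C(1-\tilde y_i)\le z_i\le C(1+\tilde y_i)-\alpha_i$; $u_i\le M_{u_i}s_i$; $\alpha_i\le C(1-s_i)$; $v_i\le M_{v_i}t_i$; $\alpha_i\ge Ct_i$), together with additional variables $c_t\in\{0,1\}$ and $p_t\in\mathbb{R}$ for $t\in\mathcal{T}$ and constraints: $p_t=\sum_{i=1}^m z_iQ_{ti}$ for all $t\in\mathcal{T}$; for all $t$ with $\hat p_t>0$: $p_t\le h_t(1-c_t)$ and $p_t\ge l_tc_t$; for all $t$ with $\hat p_t<0$: $p_t\ge l_t(1-c_t)$ and $p_t\le h_tc_t$. Then the optimal value of $P_C(\mathbf{y})$ equals the maximum number of test nodes that are simultaneously certifiably non-robust, i.e. $\max\big\{|\{t\in\mathcal{T}:\operatorname{sign}(\hat p_t)\sum_{i=1}^m\tilde y_i\alpha_iQ_{ti}\le 0\}| : \tilde{\mathbf{y}}\in\mathcal{A}(\mathbf{y}),\ \boldsymbol\alpha\in\mathcal{S}(\tilde{\mathbf{y}})\big\}$.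
   Context: Binary classification with $m$ labeled nodes. For $\tilde{\mathbf{y}}\in\{-1,1\}^m$, the bias-free kernel SVM dual is $D(\tilde{\mathbf{y}}):\ \min_{\boldsymbol\alpha}-\sum_i\alpha_i+\tfrac12\sum_{i,j}\tilde y_i\tilde y_j\alpha_i\alpha_jQ_{ij}$ s.t. $0\le\alpha_i\le C$ for all $i\in[m]$; $\mathcal{S}(\tilde{\mathbf{y}})$ is its set of optimal solutions; the prediction score of node $t$ is $p_t=\sum_i\tilde y_i\alpha_iQ_{ti}$ and the predicted class is its sign. The adversary with budget $\epsilon\in[0,1]$ chooses one $\tilde{\mathbf{y}}\in\mathcal{A}(\mathbf{y})=\{\tilde{\mathbf{y}}\in\{-1,1\}^m:\|\tilde{\mathbf{y}}-\mathbf{y}\|_0\le\lfloor\epsilon m\rfloor\}$ used for all test nodes simultaneously. A test node $t$ counts as non-robust under $(\tilde{\mathbf{y}},\boldsymbol\alpha)$ if $\operatorname{sign}(\hat p_t)p_t\le0$. *)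

theory Defs
  imports Complex_Main
begin

(* Labeled nodes are indexed by {..<m}; vectors are functions nat => real
   (values outside {..<m} are irrelevant).
   Q i j = Q_{ij} for labeled nodes, Qt t i = Q_{ti}. *)

definition label_vec :: "nat \<Rightarrow> (nat \<Rightarrow> real) \<Rightarrow> bool" where
  "label_vec m y \<longleftrightarrow> (\<forall>i<m. y i = -1 \<or> y i = 1)"

definition psd :: "nat \<Rightarrow> (nat \<Rightarrow> nat \<Rightarrow> real) \<Rightarrow> bool" where
  "psd m Q \<longleftrightarrow> (\<forall>x::nat \<Rightarrow> real. 0 \<le> (\<Sum>i<m. \<Sum>j<m. x i * x j * Q i j))"

definition sym_mat :: "nat \<Rightarrow> (nat \<Rightarrow> nat \<Rightarrow> real) \<Rightarrow> bool" where
  "sym_mat m Q \<longleftrightarrow> (\<forall>i<m. \<forall>j<m. Q i j = Q j i)"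

text \<open>Objective of the bias-free kernel SVM dual D(yt).\<close>
definition dual_obj :: "nat \<Rightarrow> (nat \<Rightarrow> nat \<Rightarrow> real) \<Rightarrow> (nat \<Rightarrow> real) \<Rightarrow> (nat \<Rightarrow> real) \<Rightarrow> real" where
  "dual_obj m Q yt \<alpha> = - (\<Sum>i<m. \<alpha> i) + (1/2) * (\<Sum>i<m. \<Sum>j<m. yt i * yt j * \<alpha> i * \<alpha> j * Q i j)"

definition dual_feasible :: "nat \<Rightarrow> real \<Rightarrow> (nat \<Rightarrow> real) \<Rightarrow> bool" where
  "dual_feasible m C \<alpha> \<longleftrightarrow> (\<forall>i<m. 0 \<le> \<alpha> i \<and> \<alpha> i \<le> C)"

definition svm_opt :: "nat \<Rightarrow> real \<Rightarrow> (nat \<Rightarrow> nat \<Rightarrow> real) \<Rightarrow> (nat \<Rightarrow> real) \<Rightarrow> (nat \<Rightarrow> real) set" where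
  "svm_opt m C Q yt = {\<alpha>. dual_feasible m C \<alpha> \<and>
      (\<forall>\<beta>. dual_feasible m C \<beta> \<longrightarrow> dual_obj m Q yt \<alpha> \<le> dual_obj m Q yt \<beta>)}"

definition adv_set :: "nat \<Rightarrow> real \<Rightarrow> (nat \<Rightarrow> real) \<Rightarrow> (nat \<Rightarrow> real) set" where
  "adv_set m \<epsilon> y = {yt. label_vec m yt \<and> card {i\<in>{..<m}. yt i \<noteq> y i} \<le> nat \<lfloor>\<epsilon> * real m\<rfloor>}"

definition pred_score :: "nat \<Rightarrow> ('a \<Rightarrow> nat \<Rightarrow> real) \<Rightarrow> (nat \<Rightarrow> real) \<Rightarrow> (nat \<Rightarrow> real) \<Rightarrow> 'a \<Rightarrow> real" where
  "pred_score m Qt yt \<alpha> t = (\<Sum>i<m. yt i * \<alpha> i * Qt t i)"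

definition num_nonrobust :: "nat \<Rightarrow> ('a \<Rightarrow> nat \<Rightarrow> real) \<Rightarrow> 'a set \<Rightarrow> ('a \<Rightarrow> real) \<Rightarrow> (nat \<Rightarrow> real) \<Rightarrow> (nat \<Rightarrow> real) \<Rightarrow> nat" where
  "num_nonrobust m Qt T phat yt \<alpha> = card {t\<in>T. sgn (phat t) * pred_score m Qt yt \<alpha> t \<le> 0}"

text \<open>Feasibility for the MILP P_C(y): all constraints of P(y) plus c, p constraints.
  Variables: alpha, yt, z, u, v, y', s, tv (the vector t of the paper), R, c, p.\<close>
definition PC_feasible ::
  "nat \<Rightarrow> real \<Rightarrow> real \<Rightarrow> (nat \<Rightarrow> nat \<Rightarrow> real) \<Rightarrow> ('a \<Rightarrow> nat \<Rightarrow> real) \<Rightarrow> 'a set \<Rightarrow>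
   (nat \<Rightarrow> real) \<Rightarrow> ('a \<Rightarrow> real) \<Rightarrow>
   (nat \<Rightarrow> real) \<Rightarrow> (nat \<Rightarrow> real) \<Rightarrow> (nat \<Rightarrow> real) \<Rightarrow> (nat \<Rightarrow> real) \<Rightarrow> (nat \<Rightarrow> real) \<Rightarrow>
   (nat \<Rightarrow> real) \<Rightarrow> (nat \<Rightarrow> real) \<Rightarrow> (nat \<Rightarrow> real) \<Rightarrow> (nat \<Rightarrow> nat \<Rightarrow> real) \<Rightarrow>
   ('a \<Rightarrow> real) \<Rightarrow> ('a \<Rightarrow> real) \<Rightarrow> bool" where
  "PC_feasible m C \<epsilon> Q Qt T y phat \<alpha> yt z u v y' s tv R c p \<longleftrightarrow>
    (let Mu = (\<lambda>i. (\<Sum>j<m. C * \<bar>Q i j\<bar>) - 1);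
         Mv = (\<lambda>i. (\<Sum>j<m. C * \<bar>Q i j\<bar>) + 1);
         l = (\<lambda>t. - C * (\<Sum>i<m. \<bar>Qt t i\<bar>));
         h = (\<lambda>t. C * (\<Sum>i<m. \<bar>Qt t i\<bar>))
     in (\<Sum>i<m. 1 - y i * yt i) \<le> 2 * of_int \<lfloor>\<epsilon> * real m\<rfloor>
      \<and> (\<forall>i<m. y' i \<in> {0,1} \<and> s i \<in> {0,1} \<and> tv i \<in> {0,1})
      \<and> (\<forall>i<m. yt i = 2 * y' i - 1)
      \<and> (\<forall>i<m. (\<Sum>j<m. R i j * Q i j) - 1 - u i + v i = 0)
      \<and> (\<forall>i<m. 0 \<le> u i \<and> 0 \<le> v i)
      \<and> (\<forall>i<m. \<forall>j<m. - C * (1 + yt i) \<le> R i j + z j \<and> R i j + z j \<le> C * (1 + yt i))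
      \<and> (\<forall>i<m. \<forall>j<m. - C * (1 - yt i) \<le> R i j - z j \<and> R i j - z j \<le> C * (1 - yt i))
      \<and> (\<forall>i<m. - \<alpha> i \<le> z i \<and> z i \<le> \<alpha> i)
      \<and> (\<forall>i<m. \<alpha> i - C * (1 - yt i) \<le> z i \<and> z i \<le> C * (1 + yt i) - \<alpha> i)
      \<and> (\<forall>i<m. u i \<le> Mu i * s i \<and> \<alpha> i \<le> C * (1 - s i))
      \<and> (\<forall>i<m. v i \<le> Mv i * tv i \<and> C * tv i \<le> \<alpha> i)
      \<and> (\<forall>t\<in>T. c t \<in> {0,1})
      \<and> (\<forall>t\<in>T. p t = (\<Sum>i<m. z i * Qt t i))
      \<and> (\<forall>t\<in>T. phat t > 0 \<longrightarrow> p t \<le> h t * (1 - c t) \<and> p t \<ge> l t * c t)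
      \<and> (\<forall>t\<in>T. phat t < 0 \<longrightarrow> p t \<ge> l t * (1 - c t) \<and> p t \<le> h t * c t))"

definition PC_values ::
  "nat \<Rightarrow> real \<Rightarrow> real \<Rightarrow> (nat \<Rightarrow> nat \<Rightarrow> real) \<Rightarrow> ('a \<Rightarrow> nat \<Rightarrow> real) \<Rightarrow> 'a set \<Rightarrow>
   (nat \<Rightarrow> real) \<Rightarrow> ('a \<Rightarrow> real) \<Rightarrow> real set" where
  "PC_values m C \<epsilon> Q Qt T y phat =
     {(\<Sum>t\<in>T. c t) | \<alpha> yt z u v y' s tv R c p.
        PC_feasible m C \<epsilon> Q Qt T y phat \<alpha> yt z u v y' s tv R c p}"

definition is_opt_value :: "real set \<Rightarrow> real \<Rightarrow> bool" where
  "is_opt_value V x \<longleftrightarrow> x \<in> V \<and> (\<forall>w\<in>V. w \<le> x)"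

end

theory Submission imports Defs begin

definition grad :: "nat \<Rightarrow> (nat\<Rightarrow>nat\<Rightarrow>real) \<Rightarrow> (nat\<Rightarrow>real) \<Rightarrow> (nat\<Rightarrow>real) \<Rightarrow> nat \<Rightarrow> real" where
  "grad m Q yt \<alpha> i = (\<Sum>j<m. yt i * yt j * \<alpha> j * Q i j) - 1"

lemma obj_expand:
  assumes "sym_mat m Q"
  shows "dual_obj m Q yt \<beta> = dual_obj m Q yt \<alpha> + (\<Sum>i<m. (\<beta> i - \<alpha> i) * grad m Q yt \<alpha> i)
     + 1/2 * (\<Sum>i<m. \<Sum>j<m. yt i * yt j * (\<beta> i - \<alpha> i) * (\<beta> j - \<alpha> j) * Q i j)"
proof -
  define d where "d = (\<lambda>i. \<beta> i - \<alpha> i)"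
  have b: "\<beta> i = \<alpha> i + d i" for i by (simp add: d_def)
  define X where "X = (\<Sum>i<m. \<Sum>j<m. yt i * yt j * d i * \<alpha> j * Q i j)"
  define D where "D = (\<Sum>i<m. \<Sum>j<m. yt i * yt j * d i * d j * Q i j)"
  define A where "A = (\<Sum>i<m. \<Sum>j<m. yt i * yt j * \<alpha> i * \<alpha> j * Q i j)"
  define Y where "Y = (\<Sum>i<m. \<Sum>j<m. yt i * yt j * \<alpha> i * d j * Q i j)"
  have "(\<Sum>i<m. \<Sum>j<m. yt i * yt j * \<beta> i * \<beta> j * Q i j) = A + X + Y + D"
    unfolding A_def X_def Y_def D_def b
    by (simp add: sum.distrib[symmetric] algebra_simps)
  moreover have "Y = X"
  proof -
    have "Y = (\<Sum>j<m. \<Sum>i<m. yt i * yt j * \<alpha> i * d j * Q i j)" unfolding Y_def by (rule sum.swap)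
    also have "\<dots> = X" unfolding X_def
      using assms unfolding sym_mat_def
      by (intro sum.cong refl) (auto simp: algebra_simps)
    finally show ?thesis .
  qed
  moreover have "(\<Sum>i<m. d i * grad m Q yt \<alpha> i) = X - (\<Sum>i<m. d i)"
    unfolding grad_def X_def by (simp add: right_diff_distrib sum_distrib_left sum_subtractf algebra_simps)
  moreover have "(\<Sum>i<m. \<beta> i) = (\<Sum>i<m. \<alpha> i) + (\<Sum>i<m. d i)" unfolding b by (simp add: sum.distrib)
  moreover have dd: "\<beta> i - \<alpha> i = d i" for i by (simp add: d_def)
  ultimately show ?thesis unfolding dual_obj_def A_def D_def dd by (simp add: algebra_simps)
qed

lemma kkt_suff:
  assumes "sym_mat m Q" "psd m Q" "dual_feasible m C \<alpha>"
    and "\<forall>i<m. (\<alpha> i < C \<longrightarrow> grad m Q yt \<alpha> i \<ge> 0) \<and> (\<alpha> i > 0 \<longrightarrow> grad m Q yt \<alpha> i \<le> 0)"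
  shows "\<alpha> \<in> svm_opt m C Q yt"
  unfolding svm_opt_def
proof (intro CollectI conjI allI impI assms(3))
  fix \<beta> assume bf: "dual_feasible m C \<beta>"
  have "0 \<le> (\<Sum>i<m. \<Sum>j<m. ((\<beta> i - \<alpha> i) * yt i) * ((\<beta> j - \<alpha> j) * yt j) * Q i j)"
    using assms(2) unfolding psd_def by (rule allE[where x="\<lambda>i. (\<beta> i - \<alpha> i) * yt i"]) simp
  hence D: "0 \<le> (\<Sum>i<m. \<Sum>j<m. yt i * yt j * (\<beta> i - \<alpha> i) * (\<beta> j - \<alpha> j) * Q i j)"
    by (simp add: algebra_simps)
  have "0 \<le> (\<beta> i - \<alpha> i) * grad m Q yt \<alpha> i" if "i < m" for i
  proof -
    have "0 \<le> \<alpha> i" "\<alpha> i \<le> C" "0 \<le> \<beta> i" "\<beta> i \<le> C" using that assms(3) bf unfolding dual_feasible_def by auto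
    moreover have "(\<alpha> i < C \<longrightarrow> grad m Q yt \<alpha> i \<ge> 0) \<and> (\<alpha> i > 0 \<longrightarrow> grad m Q yt \<alpha> i \<le> 0)" using assms(4) that by blast
    ultimately consider "grad m Q yt \<alpha> i > 0" "\<alpha> i = 0" | "grad m Q yt \<alpha> i < 0" "\<alpha> i = C" | "grad m Q yt \<alpha> i = 0"
      by force
    thus ?thesis using \<open>0 \<le> \<beta> i\<close> \<open>\<beta> i \<le> C\<close>
      by cases (auto intro!: mult_nonneg_nonneg mult_nonpos_nonpos)
  qed
  hence "0 \<le> (\<Sum>i<m. (\<beta> i - \<alpha> i) * grad m Q yt \<alpha> i)" by (intro sum_nonneg) auto
  with D show "dual_obj m Q yt \<alpha> \<le> dual_obj m Q yt \<beta>" using obj_expand[OF assms(1), of yt \<beta> \<alpha>] by linarith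
qed

lemma sum_single:
  fixes i m :: nat
  assumes "i < m" "\<And>k. k \<noteq> i \<Longrightarrow> f k = 0"
  shows "(\<Sum>k<m. f k) = (f i::real)"
proof -
  have "(\<Sum>k<m. f k) = (\<Sum>k\<in>{i}. f k)"
    by (rule sum.mono_neutral_cong_right) (use assms in simp_all)
  thus ?thesis by simp
qed

lemma single_pert:
  assumes "sym_mat m Q" "i < m"
  shows "dual_obj m Q yt (\<alpha>(i := \<alpha> i + e)) = dual_obj m Q yt \<alpha> + e * grad m Q yt \<alpha> i + 1/2 * (yt i * yt i * e * e * Q i i)"
proof -
  have dd: "(\<alpha>(i := \<alpha> i + e)) k - \<alpha> k = (if k = i then e else 0)" for k by simp
  have "(\<Sum>k<m. ((\<alpha>(i := \<alpha> i + e)) k - \<alpha> k) * grad m Q yt \<alpha> k) = (\<Sum>k<m. if k = i then e * grad m Q yt \<alpha> k else 0)"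
    unfolding dd by (rule sum.cong) auto
  hence s1: "(\<Sum>k<m. ((\<alpha>(i := \<alpha> i + e)) k - \<alpha> k) * grad m Q yt \<alpha> k) = e * grad m Q yt \<alpha> i"
    using assms(2) by simp
  have s2: "(\<Sum>a<m. \<Sum>b<m. yt a * yt b * ((\<alpha>(i := \<alpha> i + e)) a - \<alpha> a) * ((\<alpha>(i := \<alpha> i + e)) b - \<alpha> b) * Q a b)
     = yt i * yt i * e * e * Q i i"
    unfolding dd
    apply (subst sum_single[OF assms(2)])
     apply simp
    apply (subst sum_single[OF assms(2)])
     apply simp
    apply simp
    done
  show ?thesis using obj_expand[OF assms(1), of yt "\<alpha>(i := \<alpha> i + e)" \<alpha>] s1 s2 by simp
qed

lemma pert_neg:
  fixes g k \<delta> :: real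
  assumes "0 < \<delta>" "\<delta> * (\<bar>k\<bar> + 1) \<le> \<bar>g\<bar>" "g \<noteq> 0"
  shows "\<delta> * \<bar>g\<bar> > 1/2 * (\<delta> * \<delta> * k)"
proof -
  have "\<delta> * \<bar>k\<bar> < \<bar>g\<bar>" using assms by (simp add: algebra_simps)
  moreover have "\<delta> * k \<le> \<delta> * \<bar>k\<bar>" using assms(1) by (simp add: mult_left_mono)
  ultimately have "1/2 * (\<delta> * k) < \<bar>g\<bar>" using assms by linarith
  hence "\<delta> * (1/2 * (\<delta> * k)) < \<delta> * \<bar>g\<bar>" using assms(1) by (simp add: mult_strict_left_mono)
  thus ?thesis by (simp add: algebra_simps)
qed

lemma kkt_nec:
  assumes "sym_mat m Q" "C > 0" "\<alpha> \<in> svm_opt m C Q yt" "i < m"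
  shows "(\<alpha> i < C \<longrightarrow> grad m Q yt \<alpha> i \<ge> 0) \<and> (\<alpha> i > 0 \<longrightarrow> grad m Q yt \<alpha> i \<le> 0)"
proof -
  define g where "g = grad m Q yt \<alpha> i"
  define k where "k = yt i * yt i * Q i i"
  have feas: "dual_feasible m C \<alpha>" and opt: "\<And>\<beta>. dual_feasible m C \<beta> \<Longrightarrow> dual_obj m Q yt \<alpha> \<le> dual_obj m Q yt \<beta>"
    using assms(3) unfolding svm_opt_def by auto
  have ai: "0 \<le> \<alpha> i" "\<alpha> i \<le> C" using feas assms(4) unfolding dual_feasible_def by auto
  have P: "dual_obj m Q yt (\<alpha>(i := \<alpha> i + e)) = dual_obj m Q yt \<alpha> + e * g + 1/2 * (e * e * k)" for e
    using single_pert[OF assms(1,4), of yt \<alpha> e] unfolding g_def k_def by (simp add: algebra_simps)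
  have F: "dual_feasible m C (\<alpha>(i := \<alpha> i + e))" if "0 \<le> \<alpha> i + e" "\<alpha> i + e \<le> C" for e
    using feas that unfolding dual_feasible_def by auto
  have A1: "g \<ge> 0" if "\<alpha> i < C"
  proof (rule ccontr)
    assume "\<not> g \<ge> 0" hence gn: "g < 0" by simp
    define \<delta> where "\<delta> = min (C - \<alpha> i) (\<bar>g\<bar> / (\<bar>k\<bar> + 1))"
    have dp: "0 < \<delta>" using gn that unfolding \<delta>_def by (simp add: abs_add_one_gt_zero divide_neg_pos divide_pos_pos)
    have "\<delta> \<le> \<bar>g\<bar> / (\<bar>k\<bar> + 1)" unfolding \<delta>_def by simp
    hence d2: "\<delta> * (\<bar>k\<bar> + 1) \<le> \<bar>g\<bar>" by (simp add: pos_le_divide_eq abs_add_one_gt_zero)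
    have "\<delta> * \<bar>g\<bar> > 1/2 * (\<delta> * \<delta> * k)" using pert_neg[OF dp d2] gn by simp
    hence "\<delta> * g + 1/2 * (\<delta> * \<delta> * k) < 0" using gn by simp
    moreover have "dual_obj m Q yt \<alpha> \<le> dual_obj m Q yt (\<alpha>(i := \<alpha> i + \<delta>))"
      by (rule opt, rule F) (use dp ai in \<open>auto simp: \<delta>_def\<close>)
    ultimately show False using P[of \<delta>] by simp
  qed
  have A2: "g \<le> 0" if "\<alpha> i > 0"
  proof (rule ccontr)
    assume "\<not> g \<le> 0" hence gn: "g > 0" by simp
    define \<delta> where "\<delta> = min (\<alpha> i) (\<bar>g\<bar> / (\<bar>k\<bar> + 1))"
    have dp: "0 < \<delta>" using gn that unfolding \<delta>_def by (simp add: abs_add_one_gt_zero divide_neg_pos divide_pos_pos)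
    have "\<delta> \<le> \<bar>g\<bar> / (\<bar>k\<bar> + 1)" unfolding \<delta>_def by simp
    hence d2: "\<delta> * (\<bar>k\<bar> + 1) \<le> \<bar>g\<bar>" by (simp add: pos_le_divide_eq abs_add_one_gt_zero)
    have "\<delta> * \<bar>g\<bar> > 1/2 * (\<delta> * \<delta> * k)" using pert_neg[OF dp d2] gn by simp
    hence "(-\<delta>) * g + 1/2 * ((-\<delta>) * (-\<delta>) * k) < 0" using gn by simp
    moreover have "dual_obj m Q yt \<alpha> \<le> dual_obj m Q yt (\<alpha>(i := \<alpha> i + (-\<delta>)))"
      by (rule opt, rule F) (use dp ai in \<open>auto simp: \<delta>_def\<close>)
    ultimately show False using P[of "-\<delta>"] by simp
  qed
  show ?thesis using A1 A2 unfolding g_def by blast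
qed


lemma card_filter_sum:
  assumes "finite A"
  shows "(\<Sum>x\<in>A. of_bool (P x)) = real (card {x\<in>A. P x})"
proof -
  have "{x\<in>A. P x} = A \<inter> {x. P x}" by blast
  thus ?thesis using assms by simp
qed

lemma budget:
  assumes "label_vec m y" "label_vec m yt"
  shows "(\<Sum>i<m. 1 - y i * yt i) = 2 * real (card {i\<in>{..<m}. yt i \<noteq> y i})"
proof -
  have "(\<Sum>i<m. 1 - y i * yt i) = (\<Sum>i<m. 2 * of_bool (yt i \<noteq> y i))"
  proof (rule sum.cong[OF refl])
    fix i assume "i \<in> {..<m}"
    hence "y i = -1 \<or> y i = 1" "yt i = -1 \<or> yt i = 1" using assms unfolding label_vec_def by auto
    thus "1 - y i * yt i = 2 * of_bool (yt i \<noteq> y i)" by auto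
  qed
  also have "\<dots> = 2 * (\<Sum>i<m. of_bool (yt i \<noteq> y i))" by (simp add: sum_distrib_left)
  also have "\<dots> = 2 * real (card {i\<in>{..<m}. yt i \<noteq> y i})" by (subst card_filter_sum) auto
  finally show ?thesis .
qed

lemma feas_to:
  assumes F: "PC_feasible m C \<epsilon> Q Qt T y phat \<alpha> yt z u v y' s tv R c p"
    and "C > 0" "sym_mat m Q" "psd m Q" "0 \<le> \<epsilon>" "label_vec m y" "finite T"
  shows "yt \<in> adv_set m \<epsilon> y \<and> \<alpha> \<in> svm_opt m C Q yt
     \<and> (\<Sum>t\<in>T. c t) \<le> real (num_nonrobust m Qt T phat yt \<alpha>)"
proof -
  define Mu where "Mu = (\<lambda>i. (\<Sum>j<m. C * \<bar>Q i j\<bar>) - 1)"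
  define Mv where "Mv = (\<lambda>i. (\<Sum>j<m. C * \<bar>Q i j\<bar>) + 1)"
  define l where "l = (\<lambda>t. - C * (\<Sum>i<m. \<bar>Qt t i\<bar>))"
  define h where "h = (\<lambda>t. C * (\<Sum>i<m. \<bar>Qt t i\<bar>))"
  have bud: "(\<Sum>i<m. 1 - y i * yt i) \<le> 2 * of_int \<lfloor>\<epsilon> * real m\<rfloor>"
    and bin: "\<forall>i<m. y' i \<in> {0,1} \<and> s i \<in> {0,1} \<and> tv i \<in> {0,1}"
    and yy: "\<forall>i<m. yt i = 2 * y' i - 1"
    and eq: "\<forall>i<m. (\<Sum>j<m. R i j * Q i j) - 1 - u i + v i = 0"
    and uv: "\<forall>i<m. 0 \<le> u i \<and> 0 \<le> v i"
    and r1: "\<forall>i<m. \<forall>j<m. - C * (1 + yt i) \<le> R i j + z j \<and> R i j + z j \<le> C * (1 + yt i)"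
    and r2: "\<forall>i<m. \<forall>j<m. - C * (1 - yt i) \<le> R i j - z j \<and> R i j - z j \<le> C * (1 - yt i)"
    and z1: "\<forall>i<m. - \<alpha> i \<le> z i \<and> z i \<le> \<alpha> i"
    and z2: "\<forall>i<m. \<alpha> i - C * (1 - yt i) \<le> z i \<and> z i \<le> C * (1 + yt i) - \<alpha> i"
    and su: "\<forall>i<m. u i \<le> Mu i * s i \<and> \<alpha> i \<le> C * (1 - s i)"
    and tvv: "\<forall>i<m. v i \<le> Mv i * tv i \<and> C * tv i \<le> \<alpha> i"
    and cb: "\<forall>t\<in>T. c t \<in> {0,1}"
    and pd: "\<forall>t\<in>T. p t = (\<Sum>i<m. z i * Qt t i)"
    and pp: "\<forall>t\<in>T. phat t > 0 \<longrightarrow> p t \<le> h t * (1 - c t) \<and> p t \<ge> l t * c t"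
    and pn: "\<forall>t\<in>T. phat t < 0 \<longrightarrow> p t \<ge> l t * (1 - c t) \<and> p t \<le> h t * c t"
    using F unfolding PC_feasible_def Let_def Mu_def Mv_def l_def h_def by auto
  have yt1: "yt i = 1 \<or> yt i = -1" if "i < m" for i using bin yy that by auto
  have lv: "label_vec m yt" unfolding label_vec_def using yt1 by auto
  have za: "z i = yt i * \<alpha> i \<and> 0 \<le> \<alpha> i \<and> \<alpha> i \<le> C" if "i < m" for i
  proof -
    have a: "- \<alpha> i \<le> z i \<and> z i \<le> \<alpha> i" "\<alpha> i - C * (1 - yt i) \<le> z i \<and> z i \<le> C * (1 + yt i) - \<alpha> i"
      using z1 z2 that by blast+
    show ?thesis using yt1[OF that] a by auto
  qed
  have Rz: "R i j = yt i * z j" if "i < m" "j < m" for i j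
    proof -
    have a: "- C * (1 + yt i) \<le> R i j + z j \<and> R i j + z j \<le> C * (1 + yt i)" "- C * (1 - yt i) \<le> R i j - z j \<and> R i j - z j \<le> C * (1 - yt i)"
      using r1 r2 that by blast+
    show ?thesis using yt1[OF that(1)] a by auto
  qed
  have df: "dual_feasible m C \<alpha>" unfolding dual_feasible_def using za by blast
  have gi: "grad m Q yt \<alpha> i = u i - v i" if "i < m" for i
  proof -
    have "(\<Sum>j<m. R i j * Q i j) = (\<Sum>j<m. yt i * yt j * \<alpha> j * Q i j)"
      by (rule sum.cong[OF refl]) (use Rz za that in \<open>auto simp: algebra_simps\<close>)
    thus ?thesis using eq that unfolding grad_def by force
  qed
  have kkt: "\<forall>i<m. (\<alpha> i < C \<longrightarrow> grad m Q yt \<alpha> i \<ge> 0) \<and> (\<alpha> i > 0 \<longrightarrow> grad m Q yt \<alpha> i \<le> 0)"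
  proof (intro allI impI conjI)
    fix i assume i: "i < m"
    { assume a: "\<alpha> i < C"
      have "tv i = 0" using tvv bin i a \<open>C > 0\<close> by force
      hence "v i \<le> 0" using tvv i by auto
      thus "grad m Q yt \<alpha> i \<ge> 0" using gi[OF i] uv i by auto }
    { assume a: "\<alpha> i > 0"
      have "s i = 0" using su bin i a \<open>C > 0\<close> by force
      hence "u i \<le> 0" using su i by auto
      thus "grad m Q yt \<alpha> i \<le> 0" using gi[OF i] uv i by auto }
  qed
  have opt: "\<alpha> \<in> svm_opt m C Q yt" by (rule kkt_suff[OF assms(3,4) df kkt])
  have "2 * real (card {i\<in>{..<m}. yt i \<noteq> y i}) \<le> 2 * of_int \<lfloor>\<epsilon> * real m\<rfloor>"
    using bud budget[OF assms(6) lv] by simp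
  hence "card {i\<in>{..<m}. yt i \<noteq> y i} \<le> nat \<lfloor>\<epsilon> * real m\<rfloor>" by linarith
  hence adv: "yt \<in> adv_set m \<epsilon> y" unfolding adv_set_def using lv by simp
  have ps: "pred_score m Qt yt \<alpha> t = p t" if "t \<in> T" for t
    unfolding pred_score_def using pd that za by (auto intro!: sum.cong simp: algebra_simps)
  have "c t \<le> of_bool (sgn (phat t) * pred_score m Qt yt \<alpha> t \<le> 0)" if t: "t \<in> T" for t
  proof (cases "c t = 1")
    case True
    have "sgn (phat t) * p t \<le> 0"
    proof (cases "phat t > 0")
      case True thus ?thesis using pp t \<open>c t = 1\<close> by auto
    next
      case False
      show ?thesis
      proof (cases "phat t < 0")
        case True thus ?thesis using pn t \<open>c t = 1\<close> by auto
      next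
        case False thus ?thesis using \<open>\<not> phat t > 0\<close> by simp
      qed
    qed
    thus ?thesis using True ps[OF t] by simp
  next
    case False thus ?thesis using cb t by auto
  qed
  hence "(\<Sum>t\<in>T. c t) \<le> (\<Sum>t\<in>T. of_bool (sgn (phat t) * pred_score m Qt yt \<alpha> t \<le> 0))"
    by (rule sum_mono)
  also have "\<dots> = real (num_nonrobust m Qt T phat yt \<alpha>)"
    unfolding num_nonrobust_def by (rule card_filter_sum[OF assms(7)])
  finally show ?thesis using adv opt by blast
qed

lemma abs_sum_bound:
  fixes w q :: "nat \<Rightarrow> real" and m :: nat
  assumes "\<And>j. j < m \<Longrightarrow> \<bar>w j\<bar> \<le> C"
  shows "\<bar>\<Sum>j<m. w j * q j\<bar> \<le> (\<Sum>j<m. C * \<bar>q j\<bar>)"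
proof -
  have "\<bar>\<Sum>j<m. w j * q j\<bar> \<le> (\<Sum>j<m. \<bar>w j * q j\<bar>)" by (rule sum_abs)
  also have "\<dots> \<le> (\<Sum>j<m. C * \<bar>q j\<bar>)"
  proof (rule sum_mono)
    fix j assume "j \<in> {..<m}"
    hence "\<bar>w j\<bar> \<le> C" using assms by auto
    thus "\<bar>w j * q j\<bar> \<le> C * \<bar>q j\<bar>" by (simp add: abs_mult mult_right_mono)
  qed
  finally show ?thesis .
qed

lemma to_feas:
  assumes adv: "yt \<in> adv_set m \<epsilon> y" and opt: "\<alpha> \<in> svm_opt m C Q yt"
    and "C > 0" "sym_mat m Q" "label_vec m y" "finite T" "0 \<le> \<epsilon>"
  shows "real (num_nonrobust m Qt T phat yt \<alpha>) \<in> PC_values m C \<epsilon> Q Qt T y phat"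
proof -
  define g where "g = grad m Q yt \<alpha>"
  define z where "z = (\<lambda>i. yt i * \<alpha> i)"
  define R where "R = (\<lambda>i j. yt i * z j)"
  define u where "u = (\<lambda>i. max (g i) 0)"
  define v where "v = (\<lambda>i. max (- g i) 0)"
  define y' where "y' = (\<lambda>i. (yt i + 1) / 2)"
  define s where "s = (\<lambda>i. of_bool (u i > 0) :: real)"
  define tv where "tv = (\<lambda>i. of_bool (v i > 0) :: real)"
  define p where "p = (\<lambda>t. \<Sum>i<m. z i * Qt t i)"
  define c where "c = (\<lambda>t. of_bool (sgn (phat t) * p t \<le> 0) :: real)"
  define Mu where "Mu = (\<lambda>i. (\<Sum>j<m. C * \<bar>Q i j\<bar>) - 1)"
  define Mv where "Mv = (\<lambda>i. (\<Sum>j<m. C * \<bar>Q i j\<bar>) + 1)"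
  define l where "l = (\<lambda>t. - C * (\<Sum>i<m. \<bar>Qt t i\<bar>))"
  define h where "h = (\<lambda>t. C * (\<Sum>i<m. \<bar>Qt t i\<bar>))"
  have lv: "label_vec m yt" and cardb: "card {i\<in>{..<m}. yt i \<noteq> y i} \<le> nat \<lfloor>\<epsilon> * real m\<rfloor>"
    using adv unfolding adv_set_def by auto
  have yt1: "yt i = 1 \<or> yt i = -1" if "i < m" for i using lv that unfolding label_vec_def by auto
  have df: "dual_feasible m C \<alpha>" using opt unfolding svm_opt_def by auto
  have ab: "0 \<le> \<alpha> i \<and> \<alpha> i \<le> C" if "i < m" for i using df that unfolding dual_feasible_def by auto
  have kkt: "(\<alpha> i < C \<longrightarrow> g i \<ge> 0) \<and> (\<alpha> i > 0 \<longrightarrow> g i \<le> 0)" if "i < m" for i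
    using kkt_nec[OF assms(4,3) opt that] unfolding g_def by blast
  have zb: "\<bar>z i\<bar> \<le> C" if "i < m" for i using yt1[OF that] ab[OF that] unfolding z_def by auto
  have gb: "\<bar>g i + 1\<bar> \<le> (\<Sum>j<m. C * \<bar>Q i j\<bar>)" if "i < m" for i
  proof -
    have "g i + 1 = (\<Sum>j<m. (yt i * z j) * Q i j)" unfolding g_def grad_def z_def
      by (simp add: algebra_simps)
    moreover have "\<bar>\<Sum>j<m. (yt i * z j) * Q i j\<bar> \<le> (\<Sum>j<m. C * \<bar>Q i j\<bar>)"
      by (rule abs_sum_bound) (use zb yt1[OF that] in \<open>auto simp: abs_mult\<close>)
    ultimately show ?thesis by simp
  qed
  have pb: "\<bar>p t\<bar> \<le> h t" for t unfolding p_def h_def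
    using abs_sum_bound[of m z C "Qt t"] zb by (simp add: sum_distrib_left)
  have c1: "(\<Sum>i<m. 1 - y i * yt i) \<le> 2 * of_int \<lfloor>\<epsilon> * real m\<rfloor>"
  proof -
    have fl: "0 \<le> \<lfloor>\<epsilon> * real m\<rfloor>" using assms(7) by simp
    have "int (card {i\<in>{..<m}. yt i \<noteq> y i}) \<le> \<lfloor>\<epsilon> * real m\<rfloor>" using cardb fl by (simp add: le_nat_iff)
    hence "real (card {i\<in>{..<m}. yt i \<noteq> y i}) \<le> of_int \<lfloor>\<epsilon> * real m\<rfloor>"
      by (metis of_int_le_iff of_int_of_nat_eq)
    thus ?thesis using budget[OF assms(5) lv] by linarith
  qed
  have c2: "\<forall>i<m. y' i \<in> {0,1} \<and> s i \<in> {0,1} \<and> tv i \<in> {0,1}"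
  proof (intro allI impI)
    fix i assume "i < m"
    thus "y' i \<in> {0,1} \<and> s i \<in> {0,1} \<and> tv i \<in> {0,1}"
      using yt1[of i] unfolding y'_def s_def tv_def by auto
  qed
  have c3: "\<forall>i<m. yt i = 2 * y' i - 1" unfolding y'_def by (simp add: field_simps)
  have c4: "\<forall>i<m. (\<Sum>j<m. R i j * Q i j) - 1 - u i + v i = 0"
  proof (intro allI impI)
    fix i assume "i < m"
    have "(\<Sum>j<m. R i j * Q i j) - 1 = g i" unfolding R_def z_def g_def grad_def
      by (simp add: algebra_simps)
    thus "(\<Sum>j<m. R i j * Q i j) - 1 - u i + v i = 0" unfolding u_def v_def by auto
  qed
  have c5: "\<forall>i<m. 0 \<le> u i \<and> 0 \<le> v i" unfolding u_def v_def by auto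
  have c6: "\<forall>i<m. \<forall>j<m. - C * (1 + yt i) \<le> R i j + z j \<and> R i j + z j \<le> C * (1 + yt i)"
  proof (intro allI impI)
    fix i j assume i: "i < m" and j: "j < m"
    show "- C * (1 + yt i) \<le> R i j + z j \<and> R i j + z j \<le> C * (1 + yt i)"
      using yt1[OF i] zb[OF j] unfolding R_def by (auto simp: abs_le_iff)
  qed
  have c7: "\<forall>i<m. \<forall>j<m. - C * (1 - yt i) \<le> R i j - z j \<and> R i j - z j \<le> C * (1 - yt i)"
  proof (intro allI impI)
    fix i j assume i: "i < m" and j: "j < m"
    show "- C * (1 - yt i) \<le> R i j - z j \<and> R i j - z j \<le> C * (1 - yt i)"
      using yt1[OF i] zb[OF j] unfolding R_def by (auto simp: abs_le_iff)
  qed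
  have c8: "\<forall>i<m. - \<alpha> i \<le> z i \<and> z i \<le> \<alpha> i"
  proof (intro allI impI)
    fix i assume i: "i < m"
    show "- \<alpha> i \<le> z i \<and> z i \<le> \<alpha> i" using yt1[OF i] ab[OF i] unfolding z_def by auto
  qed
  have c9: "\<forall>i<m. \<alpha> i - C * (1 - yt i) \<le> z i \<and> z i \<le> C * (1 + yt i) - \<alpha> i"
  proof (intro allI impI)
    fix i assume i: "i < m"
    show "\<alpha> i - C * (1 - yt i) \<le> z i \<and> z i \<le> C * (1 + yt i) - \<alpha> i" using yt1[OF i] ab[OF i] unfolding z_def by auto
  qed
  have c10: "\<forall>i<m. u i \<le> Mu i * s i \<and> \<alpha> i \<le> C * (1 - s i)"
  proof (intro allI impI)
    fix i assume i: "i < m"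
    show "u i \<le> Mu i * s i \<and> \<alpha> i \<le> C * (1 - s i)"
    proof (cases "u i > 0")
      case True
      hence "g i > 0" "u i = g i" unfolding u_def by auto
      moreover have "\<alpha> i = 0" using kkt[OF i] ab[OF i] \<open>g i > 0\<close> by force
      ultimately show ?thesis using gb[OF i] True unfolding s_def Mu_def by (auto simp: abs_le_iff)
    next
      case False
      hence "u i = 0" unfolding u_def by auto
      thus ?thesis using False ab[OF i] unfolding s_def by auto
    qed
  qed
  have c11: "\<forall>i<m. v i \<le> Mv i * tv i \<and> C * tv i \<le> \<alpha> i"
  proof (intro allI impI)
    fix i assume i: "i < m"
    show "v i \<le> Mv i * tv i \<and> C * tv i \<le> \<alpha> i"
    proof (cases "v i > 0")
      case True
      hence "g i < 0" "v i = - g i" unfolding v_def by auto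
      moreover have "\<alpha> i = C" using kkt[OF i] ab[OF i] \<open>g i < 0\<close> by force
      ultimately show ?thesis using gb[OF i] True unfolding tv_def Mv_def by (auto simp: abs_le_iff)
    next
      case False
      hence "v i = 0" unfolding v_def by auto
      thus ?thesis using False ab[OF i] unfolding tv_def by auto
    qed
  qed
  have c12: "\<forall>t\<in>T. c t \<in> {0,1}" unfolding c_def by auto
  have c13: "\<forall>t\<in>T. p t = (\<Sum>i<m. z i * Qt t i)" unfolding p_def by simp
  have c14: "\<forall>t\<in>T. phat t > 0 \<longrightarrow> p t \<le> h t * (1 - c t) \<and> p t \<ge> l t * c t"
  proof (intro ballI impI)
    fix t assume "phat t > 0"
    thus "p t \<le> h t * (1 - c t) \<and> p t \<ge> l t * c t"
      using pb[of t] unfolding c_def l_def h_def by (auto simp: abs_le_iff)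
  qed
  have c15: "\<forall>t\<in>T. phat t < 0 \<longrightarrow> p t \<ge> l t * (1 - c t) \<and> p t \<le> h t * c t"
  proof (intro ballI impI)
    fix t assume "phat t < 0"
    thus "p t \<ge> l t * (1 - c t) \<and> p t \<le> h t * c t"
      using pb[of t] unfolding c_def l_def h_def by (auto simp: abs_le_iff)
  qed
  have F: "PC_feasible m C \<epsilon> Q Qt T y phat \<alpha> yt z u v y' s tv R c p"
    unfolding PC_feasible_def Let_def
    by (intro conjI c1 c2 c3 c4 c5 c6 c7 c8 c9 c10[unfolded Mu_def] c11[unfolded Mv_def] c12 c13
      c14[unfolded l_def h_def] c15[unfolded l_def h_def])
  have ps: "pred_score m Qt yt \<alpha> t = p t" for t
    unfolding pred_score_def p_def z_def by (simp add: algebra_simps)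
  have "(\<Sum>t\<in>T. c t) = (\<Sum>t\<in>T. of_bool (sgn (phat t) * pred_score m Qt yt \<alpha> t \<le> 0))"
    unfolding c_def ps ..
  also have "\<dots> = real (num_nonrobust m Qt T phat yt \<alpha>)"
    unfolding num_nonrobust_def by (rule card_filter_sum[OF assms(6)])
  finally have E: "real (num_nonrobust m Qt T phat yt \<alpha>) = (\<Sum>t\<in>T. c t)" by simp
  show ?thesis unfolding PC_values_def using E F by blast
qed


theorem theorem2:
  fixes m :: nat and C \<epsilon> :: real
    and y :: "nat \<Rightarrow> real" and Q :: "nat \<Rightarrow> nat \<Rightarrow> real"
    and T :: "'a set" and Qt :: "'a \<Rightarrow> nat \<Rightarrow> real"
    and \<alpha>s :: "nat \<Rightarrow> real"
  assumes "m \<ge> 1" and "C > 0" and "0 \<le> \<epsilon>" and "\<epsilon> \<le> 1"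
    and "label_vec m y"
    and "sym_mat m Q" and "psd m Q"
    and "finite T"
    and "\<alpha>s \<in> svm_opt m C Q y"
    and "\<forall>t\<in>T. pred_score m Qt y \<alpha>s t \<noteq> 0"
  shows "is_opt_value (PC_values m C \<epsilon> Q Qt T y (pred_score m Qt y \<alpha>s))
           (real (Max {num_nonrobust m Qt T (pred_score m Qt y \<alpha>s) yt \<alpha> |yt \<alpha>.
                         yt \<in> adv_set m \<epsilon> y \<and> \<alpha> \<in> svm_opt m C Q yt}))"
proof -
  define phat where "phat = pred_score m Qt y \<alpha>s"
  define S where "S = {num_nonrobust m Qt T phat yt \<alpha> |yt \<alpha>.
                         yt \<in> adv_set m \<epsilon> y \<and> \<alpha> \<in> svm_opt m C Q yt}"
  have Ssub: "S \<subseteq> {..card T}"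
  proof
    fix n assume "n \<in> S"
    then obtain yt \<alpha> where "n = num_nonrobust m Qt T phat yt \<alpha>" unfolding S_def by blast
    hence "n \<le> card T" unfolding num_nonrobust_def using assms(8) by (simp add: card_mono)
    thus "n \<in> {..card T}" by simp
  qed
  hence finS: "finite S" by (rule finite_subset) simp
  have yadv: "y \<in> adv_set m \<epsilon> y" unfolding adv_set_def using assms(5) by simp
  have neS: "S \<noteq> {}" unfolding S_def using yadv assms(9) by blast
  have MS: "Max S \<in> S" using finS neS by (rule Max_in)
  then obtain yt \<alpha> where M: "Max S = num_nonrobust m Qt T phat yt \<alpha>"
    and yt: "yt \<in> adv_set m \<epsilon> y" and al: "\<alpha> \<in> svm_opt m C Q yt" unfolding S_def by blast
  have mem: "real (Max S) \<in> PC_values m C \<epsilon> Q Qt T y phat"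
    unfolding M by (rule to_feas[OF yt al assms(2,6,5,8,3)])
  have ub: "w \<le> real (Max S)" if wv: "w \<in> PC_values m C \<epsilon> Q Qt T y phat" for w
  proof -
    obtain \<alpha>' yt' z u v y' s tv R c p where w: "w = (\<Sum>t\<in>T. c t)"
      and F: "PC_feasible m C \<epsilon> Q Qt T y phat \<alpha>' yt' z u v y' s tv R c p"
      using wv unfolding PC_values_def by blast
    have r: "yt' \<in> adv_set m \<epsilon> y \<and> \<alpha>' \<in> svm_opt m C Q yt'
        \<and> (\<Sum>t\<in>T. c t) \<le> real (num_nonrobust m Qt T phat yt' \<alpha>')"
      by (rule feas_to[OF F assms(2,6,7,3,5,8)])
    hence "num_nonrobust m Qt T phat yt' \<alpha>' \<in> S" unfolding S_def by blast
    hence "num_nonrobust m Qt T phat yt' \<alpha>' \<le> Max S" using finS by simp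
    thus ?thesis using r w by linarith
  qed
  show ?thesis unfolding is_opt_value_def phat_def[symmetric] S_def[symmetric] using mem ub by blast
qed

end
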